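(* For any $n\in\mathbb{N}$ and any pair of convex bodies $K, B\subset\mathbb{R}^n$ that are symmetric with respect to the origin, one has \[ \hat{M}(K,B)\le \hat{M}\big(B^{\circ}, K^{\circ}/2\big)^2 . \]
   Context: For a set $A\subset\mathbb{R}^n$, $A^{\circ}:=\{u\in\mathbb{R}^n:\sup_{x\in A}\langle x,u\rangle\le 1\}$ is its polar body. For a set $K$ and a symmetric convex body $B$, the convex separation (convexified packing) number is \[\hat{M}(K,B):=\sup\{N:\ \exists\, x_1,\dots,x_N\in K \text{ such that } (x_j+\mathrm{int}\,B)\cap \mathrm{conv}\{x_i: i<j\}=\emptyset \text{ for all } j=1,\dots,N\},\] where $\mathrm{int}$ denotes interior and $\mathrm{conv}$ the convex hull; the value $+\infty$ is allowed. For $t>0$, $tB$ and $B/t$ denote dilates. *)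

theory Defs
  imports "HOL-Analysis.Analysis" "HOL-Library.Extended_Nat"
begin

definition polar :: "'a::euclidean_space set \<Rightarrow> 'a set" where
  "polar A = {u. \<forall>x\<in>A. x \<bullet> u \<le> 1}"

definition convex_body :: "'a::euclidean_space set \<Rightarrow> bool" where
  "convex_body K \<longleftrightarrow> compact K \<and> convex K \<and> interior K \<noteq> {}"

definition origin_symmetric :: "'a::euclidean_space set \<Rightarrow> bool" where
  "origin_symmetric K \<longleftrightarrow> (\<forall>x\<in>K. - x \<in> K)"

definition conv_sep_number :: "'a::euclidean_space set \<Rightarrow> 'a set \<Rightarrow> enat" where
  "conv_sep_number K B = Sup {enat N | N. \<exists>x :: nat \<Rightarrow> 'a.
      (\<forall>j<N. x j \<in> K) \<and>
      (\<forall>j<N. ((\<lambda>b. x j + b) ` interior B) \<inter> convex hull (x ` {..<j}) = {})}"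

end

theory Submission
  imports Defs
begin

lemma polar_half_int:
  fixes K :: "'a::euclidean_space set"
  assumes sym: "origin_symmetric K"
    and z: "z \<in> interior ((\<lambda>u. (1/2) *\<^sub>R u) ` polar K)" and x: "x \<in> K"
  shows "- 1/2 < x \<bullet> z"
proof (cases "x = 0")
  case True then show ?thesis by simp
next
  case False
  obtain e where e: "e > 0" "ball z e \<subseteq> (\<lambda>u. (1/2) *\<^sub>R u) ` polar K"
    using z by (meson open_contains_ball open_interior interior_subset subset_trans)
  define w where "w = z - (e/2/norm x) *\<^sub>R x"
  have "dist z w < e" using e False by (simp add: w_def dist_norm)
  then have "w \<in> (\<lambda>u. (1/2) *\<^sub>R u) ` polar K" using e by auto
  then obtain v where v: "v \<in> polar K" "w = (1/2) *\<^sub>R v" by auto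
  have "-x \<in> K" using sym x by (simp add: origin_symmetric_def)
  then have "(-x) \<bullet> v \<le> 1" using v by (auto simp add: polar_def)
  then have "x \<bullet> w \<ge> -1/2" using v by (simp add: inner_minus_left)
  moreover have "x \<bullet> w = x \<bullet> z - e/2 * norm x"
    using False by (simp add: w_def inner_diff_right power2_norm_eq_inner[symmetric] power2_eq_square)
  moreover have "e/2 * norm x > 0" using e False by simp
  ultimately show ?thesis by linarith
qed

lemma dual_seq:
  fixes K P :: "'a::euclidean_space set"
  assumes sym: "origin_symmetric K"
    and p: "\<forall>k<m. p k \<in> P" and y: "\<forall>k<m. y k \<in> K"
    and gap: "\<forall>i k. i < k \<longrightarrow> k < m \<longrightarrow> y k \<bullet> p i \<le> y k \<bullet> p k - 1/2"
  shows "enat m \<le> conv_sep_number P ((\<lambda>u. (1/2) *\<^sub>R u) ` polar K)"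
  unfolding conv_sep_number_def
proof (rule Sup_upper, intro CollectI exI conjI)
  show "\<forall>j<m. p j \<in> P" by fact
  show "\<forall>j<m. (\<lambda>b. p j + b) ` interior ((\<lambda>u. (1/2) *\<^sub>R u) ` polar K) \<inter> convex hull p ` {..<j} = {}"
  proof (intro allI impI)
    fix j assume j: "j < m"
    have hs: "convex hull p ` {..<j} \<subseteq> {w. y j \<bullet> w \<le> y j \<bullet> p j - 1/2}"
      by (rule hull_minimal) (use gap j in \<open>auto simp: convex_halfspace_le\<close>)
    show "(\<lambda>b. p j + b) ` interior ((\<lambda>u. (1/2) *\<^sub>R u) ` polar K) \<inter> convex hull p ` {..<j} = {}"
    proof (rule ccontr)
      assume "\<not> ?thesis"
      then obtain z where z: "z \<in> interior ((\<lambda>u. (1/2) *\<^sub>R u) ` polar K)"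
        and "p j + z \<in> convex hull p ` {..<j}" by auto
      then have "y j \<bullet> (p j + z) \<le> y j \<bullet> p j - 1/2" using hs by auto
      moreover have "- 1/2 < y j \<bullet> z" using polar_half_int[OF sym z] y j by auto
      ultimately show False by (simp add: inner_add_right)
    qed
  qed
qed simp

lemma card_seq:
  fixes K P :: "'a::euclidean_space set"
  fixes A :: "nat set"
  assumes sym: "origin_symmetric K" and fin: "finite A"
    and p: "\<forall>a\<in>A. p a \<in> P" and y: "\<forall>a\<in>A. y a \<in> K"
    and gap: "\<forall>a\<in>A. \<forall>b\<in>A. a < b \<longrightarrow> y a \<bullet> p b \<le> y a \<bullet> p a - 1/2"
  shows "enat (card A) \<le> conv_sep_number P ((\<lambda>u. (1/2) *\<^sub>R u) ` polar K)"
proof -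
  define l where "l = rev (sorted_list_of_set A)"
  have len: "length l = card A" by (simp add: l_def)
  have setl: "set l = A" using fin by (simp add: l_def)
  have sw: "sorted_wrt (>) l" unfolding l_def sorted_wrt_rev
    using strict_sorted_list_of_set by blast
  have inA: "l ! k \<in> A" if "k < card A" for k using that len setl nth_mem by metis
  show ?thesis
    unfolding len[symmetric]
  proof (rule dual_seq[OF sym])
    show "\<forall>k<length l. (p \<circ> (!) l) k \<in> P" using inA p len by auto
    show "\<forall>k<length l. (y \<circ> (!) l) k \<in> K" using inA y len by auto
    show "\<forall>i k. i < k \<longrightarrow> k < length l \<longrightarrow>
      (y \<circ> (!) l) k \<bullet> (p \<circ> (!) l) i \<le> (y \<circ> (!) l) k \<bullet> (p \<circ> (!) l) k - 1/2"
    proof (intro allI impI)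
      fix i k assume ik: "i < k" "k < length l"
      have "l ! k < l ! i" using sorted_wrt_nth_less[OF sw ik] by simp
      then show "(y \<circ> (!) l) k \<bullet> (p \<circ> (!) l) i \<le> (y \<circ> (!) l) k \<bullet> (p \<circ> (!) l) k - 1/2"
        using gap inA ik len by auto
    qed
  qed
qed

lemma zero_interior:
  fixes B :: "'a::euclidean_space set"
  assumes "convex_body B" "origin_symmetric B"
  shows "0 \<in> interior B"
proof -
  from assms obtain z where z: "z \<in> interior B" by (auto simp: convex_body_def)
  have "uminus ` B = B" using assms(2) unfolding origin_symmetric_def by force
  then have "-z \<in> interior B" using z interior_negations[of B] by auto
  moreover have "convex (interior B)" using assms by (simp add: convex_body_def convex_interior)
  ultimately have "(1/2) *\<^sub>R z + (1/2) *\<^sub>R (-z) \<in> interior B"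
    using z by (simp add: convex_def del: scaleR_minus_right)
  then show ?thesis by simp
qed

lemma sep_functional:
  fixes B :: "'a::euclidean_space set"
  assumes B: "convex_body B" "origin_symmetric B" and Q: "Q \<noteq> {}"
    and disj: "(\<lambda>b. x0 + b) ` interior B \<inter> convex hull Q = {}"
  shows "\<exists>u \<in> polar B. \<forall>q\<in>Q. 1 \<le> u \<bullet> x0 - u \<bullet> q"
proof -
  have cB: "convex B" "compact B" "interior B \<noteq> {}" using B by (auto simp: convex_body_def)
  have "convex ((\<lambda>b. x0 + b) ` interior B)"
    using cB by (simp add: convex_interior convex_translation)
  then obtain a \<beta> where a: "a \<noteq> 0" "\<forall>x\<in>convex hull Q. a \<bullet> x \<le> \<beta>"
    "\<forall>x\<in>(\<lambda>b. x0 + b) ` interior B. a \<bullet> x \<ge> \<beta>"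
    using separating_hyperplane_sets[of "convex hull Q" "(\<lambda>b. x0 + b) ` interior B"] disj Q cB
    by (auto simp: convex_convex_hull)
  define s where "s = a \<bullet> x0 - \<beta>"
  have "uminus ` B = B" using B(2) unfolding origin_symmetric_def by force
  then have negI: "-z \<in> interior B" if "z \<in> interior B" for z
    using that interior_negations[of B] by auto
  have intle: "a \<bullet> z \<le> s" if "z \<in> interior B" for z
  proof -
    have "a \<bullet> (x0 + - z) \<ge> \<beta>" using a(3) negI[OF that] by auto
    then show ?thesis by (simp add: s_def inner_add_right inner_diff_right)
  qed
  have Ble: "a \<bullet> z \<le> s" if "z \<in> B" for z
  proof -
    have "closure (interior B) = B"
      using convex_closure_interior[OF cB(1,3)] cB(2) by (simp add: compact_imp_closed)
    moreover have "closure (interior B) \<subseteq> {z. a \<bullet> z \<le> s}"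
      by (rule closure_minimal) (use intle in \<open>auto simp: closed_halfspace_le\<close>)
    ultimately show ?thesis using that by auto
  qed
  obtain e where e: "e > 0" "ball 0 e \<subseteq> B"
    using zero_interior[OF B] by (meson interior_subset open_contains_ball_eq open_interior subset_trans)
  have "(e/2/norm a) *\<^sub>R a \<in> B" using e a(1) by (intro subsetD[OF e(2)]) simp
  then have "a \<bullet> ((e/2/norm a) *\<^sub>R a) \<le> s" by (rule Ble)
  moreover have "a \<bullet> ((e/2/norm a) *\<^sub>R a) = e/2 * norm a"
    using a(1) by (simp add: power2_norm_eq_inner[symmetric] power2_eq_square)
  moreover have "e/2 * norm a > 0" using e a(1) by simp
  ultimately have spos: "s > 0" by linarith
  define u where "u = (1/s) *\<^sub>R a"
  have "u \<in> polar B"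
    unfolding polar_def u_def using Ble spos by (auto simp: inner_commute divide_simps)
  moreover have "1 \<le> u \<bullet> x0 - u \<bullet> q" if "q \<in> Q" for q
  proof -
    have "a \<bullet> q \<le> \<beta>" using a(2) hull_subset[of Q convex] that by auto
    then have "s \<le> a \<bullet> x0 - a \<bullet> q" by (simp add: s_def)
    then show ?thesis using spos by (simp add: u_def divide_simps)
  qed
  ultimately show ?thesis by blast
qed

theorem theorem1:
  fixes K B :: "'a::euclidean_space set"
  assumes "convex_body K" and "origin_symmetric K"
    and "convex_body B" and "origin_symmetric B"
  shows "conv_sep_number K B \<le> (conv_sep_number (polar B) ((\<lambda>u. (1/2) *\<^sub>R u) ` polar K)) ^ 2"
proof -
  note symK = assms(2) and Bb = assms(3,4)
  define M where "M = conv_sep_number (polar B) ((\<lambda>u. (1/2) *\<^sub>R u) ` polar K)"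
  have negpol: "- v \<in> polar B" if "v \<in> polar B" for v
  proof -
    have "b \<bullet> (- v) \<le> 1" if "b \<in> B" for b
    proof -
      have "-b \<in> B" using Bb(2) that by (simp add: origin_symmetric_def)
      then have "(-b) \<bullet> v \<le> 1" using \<open>v \<in> polar B\<close> by (auto simp: polar_def)
      then show ?thesis by simp
    qed
    then show ?thesis by (simp add: polar_def)
  qed
  have abs_pol: "\<bar>b \<bullet> v\<bar> \<le> 1" if "v \<in> polar B" "b \<in> B" for v b
  proof -
    have "-b \<in> B" using Bb(2) that(2) by (simp add: origin_symmetric_def)
    then have "(-b) \<bullet> v \<le> 1" "b \<bullet> v \<le> 1" using that by (auto simp: polar_def)
    then show ?thesis by simp
  qed
  show ?thesis
  proof (cases M)
    case infinity
    then show ?thesis by (simp add: M_def[symmetric] power2_eq_square)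
  next
    case (enat m)
    have main: "enat N \<le> enat (m * m)"
      if xK: "\<forall>j<N. x j \<in> K"
        and xs: "\<forall>j<N. (\<lambda>b. x j + b) ` interior B \<inter> convex hull (x ` {..<j}) = {}" for N x
    proof -
      have "\<forall>j. \<exists>v. j < N \<longrightarrow> v \<in> polar B \<and> (\<forall>i<j. 1 \<le> v \<bullet> x j - v \<bullet> x i)"
      proof
        fix j
        show "\<exists>v. j < N \<longrightarrow> v \<in> polar B \<and> (\<forall>i<j. 1 \<le> v \<bullet> x j - v \<bullet> x i)"
        proof (cases "j < N \<and> j > 0")
          case True
          then obtain v where "v \<in> polar B" "\<forall>q\<in>x ` {..<j}. 1 \<le> v \<bullet> x j - v \<bullet> q"
            using sep_functional[OF Bb, of "x ` {..<j}" "x j"] xs by auto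
          then show ?thesis by auto
        next
          case False
          then show ?thesis by (intro exI[of _ 0]) (auto simp: polar_def)
        qed
      qed
      then obtain u where u: "\<And>j. j < N \<Longrightarrow> u j \<in> polar B"
        "\<And>i j. j < N \<Longrightarrow> i < j \<Longrightarrow> 1 \<le> u j \<bullet> x j - u j \<bullet> x i"
        by metis
      show ?thesis
      proof (cases "N = 0")
        case True then show ?thesis by (simp add: zero_enat_def)
      next
        case False
        define d where "d j = u j \<bullet> x j" for j
        define Dlo where "Dlo = Min (d ` {..<N})"
        define Dhi where "Dhi = Max (d ` {..<N})"
        have ne: "d ` {..<N} \<noteq> {}" using False by auto
        have dlo: "Dlo \<le> d j" "d j \<le> Dhi" if "j < N" for j
          using that by (auto simp: Dlo_def Dhi_def)
        obtain jh where jh: "jh < N" "Dhi = d jh"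
          using Max_in[OF _ ne] by (auto simp: Dhi_def)
        obtain jl where jl: "jl < N" "Dlo = d jl"
          using Min_in[OF _ ne] by (auto simp: Dlo_def)
        obtain uu xx where uu: "uu \<in> polar B" "xx \<in> K" "Dhi - Dlo \<le> 2 * (xx \<bullet> uu)"
        proof (cases "Dhi \<ge> - Dlo")
          case True
          show ?thesis using that[of "u jh" "x jh"] u(1) xK jh True jl dlo[OF jl(1)]
            by (auto simp: d_def inner_commute)
        next
          case False
          show ?thesis using that[of "- u jl" "x jl"] negpol u(1) xK jh False jl
            by (auto simp: d_def inner_commute)
        qed
        define c where "c = xx \<bullet> uu"
        have c0: "c \<ge> 0" using uu dlo[OF jl(1)] jl by (simp add: c_def)
        define kb where "kb = nat \<lfloor>2 * (Dhi - Dlo)\<rfloor> + 1"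
        have kble: "real k \<le> 4 * c" if "k < kb" for k
        proof -
          have "real k \<le> real (nat \<lfloor>2 * (Dhi - Dlo)\<rfloor>)" using that by (simp add: kb_def)
          also have "\<dots> \<le> 2 * (Dhi - Dlo)" using dlo[OF jl(1)] jl
            by (simp add: of_nat_nat)
          finally show ?thesis using uu by (simp add: c_def)
        qed
        have "enat kb \<le> M" unfolding M_def
        proof (rule dual_seq[OF symK, where p = "\<lambda>k. (-1 + real k / (2*c)) *\<^sub>R uu" and y = "\<lambda>k. xx"])
          show "\<forall>k<kb. xx \<in> K" using uu by simp
          show "\<forall>k<kb. (-1 + real k / (2*c)) *\<^sub>R uu \<in> polar B"
          proof (intro allI impI)
            fix k assume k: "k < kb"
            have t1: "real k / (2*c) \<le> 2"
            proof (cases "c = 0")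
              case True then show ?thesis by simp
            next
              case False then show ?thesis using kble[OF k] c0 by (simp add: divide_simps)
            qed
            have t0: "real k / (2*c) \<ge> 0" using c0 by simp
            have "b \<bullet> ((-1 + real k / (2*c)) *\<^sub>R uu) \<le> 1" if "b \<in> B" for b
            proof -
              have "\<bar>-1 + real k / (2*c)\<bar> \<le> 1" using t0 t1 by linarith
              moreover have "\<bar>b \<bullet> uu\<bar> \<le> 1" using abs_pol[OF uu(1) that] .
              ultimately have "\<bar>(-1 + real k / (2*c)) * (b \<bullet> uu)\<bar> \<le> 1"
                by (simp add: abs_mult mult_le_one)
              then show ?thesis by simp
            qed
            then show "(-1 + real k / (2*c)) *\<^sub>R uu \<in> polar B" by (simp add: polar_def)
          qed
          show "\<forall>i k. i < k \<longrightarrow> k < kb \<longrightarrow>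
            xx \<bullet> ((-1 + real i / (2*c)) *\<^sub>R uu) \<le> xx \<bullet> ((-1 + real k / (2*c)) *\<^sub>R uu) - 1/2"
          proof (intro allI impI)
            fix i k assume ik: "i < k" "k < kb"
            have cpos: "c > 0" using kble[OF ik(2)] ik(1) by simp
            have e: "xx \<bullet> ((-1 + real j / (2*c)) *\<^sub>R uu) = - c + real j / 2" for j
              using cpos by (simp add: c_def[symmetric] algebra_simps)
            have "real i + 1 \<le> real k" using ik(1) by simp
            then show "xx \<bullet> ((-1 + real i / (2*c)) *\<^sub>R uu) \<le> xx \<bullet> ((-1 + real k / (2*c)) *\<^sub>R uu) - 1/2"
              unfolding e by linarith
          qed
        qed
        then have kbm: "kb \<le> m" using enat by simp
        define bk where "bk j = nat \<lfloor>2 * (d j - Dlo)\<rfloor>" for j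
        define fib where "fib k = {j \<in> {..<N}. bk j = k}" for k
        have fibm: "card (fib k) \<le> m" for k
        proof -
          have "enat (card (fib k)) \<le> M" unfolding M_def
          proof (rule card_seq[OF symK])
            show "finite (fib k)" by (simp add: fib_def)
            show "\<forall>a\<in>fib k. u a \<in> polar B" using u(1) by (simp add: fib_def)
            show "\<forall>a\<in>fib k. x a \<in> K" using xK by (simp add: fib_def)
            show "\<forall>a\<in>fib k. \<forall>b\<in>fib k. a < b \<longrightarrow> x a \<bullet> u b \<le> x a \<bullet> u a - 1/2"
            proof (intro ballI impI)
              fix a b assume a: "a \<in> fib k" and b: "b \<in> fib k" and ab: "a < b"
              have aN: "a < N" and bN: "b < N" using a b by (auto simp: fib_def)
              have "nat \<lfloor>2 * (d a - Dlo)\<rfloor> = nat \<lfloor>2 * (d b - Dlo)\<rfloor>"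
                using a b by (simp add: fib_def bk_def)
              moreover have "\<lfloor>2 * (d a - Dlo)\<rfloor> \<ge> 0" "\<lfloor>2 * (d b - Dlo)\<rfloor> \<ge> 0"
                using dlo aN bN by auto
              ultimately have fl: "\<lfloor>2 * (d a - Dlo)\<rfloor> = \<lfloor>2 * (d b - Dlo)\<rfloor>"
                by (metis nat_0_le)
              have "2 * (d b - Dlo) < real_of_int \<lfloor>2 * (d b - Dlo)\<rfloor> + 1" by linarith
              moreover have "real_of_int \<lfloor>2 * (d a - Dlo)\<rfloor> \<le> 2 * (d a - Dlo)" by linarith
              ultimately have "d b < d a + 1/2" unfolding fl by argo
              moreover have "1 \<le> u b \<bullet> x b - u b \<bullet> x a" using u(2)[OF bN ab] .
              ultimately show "x a \<bullet> u b \<le> x a \<bullet> u a - 1/2"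
                by (simp add: d_def inner_commute)
            qed
          qed
          then show ?thesis using enat by simp
        qed
        have cover: "{..<N} \<subseteq> (\<Union>k\<in>{..<kb}. fib k)"
        proof
          fix j assume j: "j \<in> {..<N}"
          have "\<lfloor>2 * (d j - Dlo)\<rfloor> \<le> \<lfloor>2 * (Dhi - Dlo)\<rfloor>"
            using dlo j by (intro floor_mono) auto
          then have "bk j < kb" by (simp add: bk_def kb_def nat_mono le_imp_less_Suc)
          then show "j \<in> (\<Union>k\<in>{..<kb}. fib k)" using j by (auto simp: fib_def)
        qed
        have "N = card {..<N}" by simp
        also have "\<dots> \<le> card (\<Union>k\<in>{..<kb}. fib k)"
          by (rule card_mono[OF _ cover]) (auto simp: fib_def)
        also have "\<dots> \<le> (\<Sum>k<kb. card (fib k))" by (rule card_UN_le) simp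
        also have "\<dots> \<le> kb * m" using sum_bounded_above[of "{..<kb}" "\<lambda>k. card (fib k)" m] fibm by simp
        also have "\<dots> \<le> m * m" using kbm by simp
        finally show ?thesis by simp
      qed
    qed
    have "conv_sep_number K B \<le> enat (m * m)"
      unfolding conv_sep_number_def by (rule Sup_least) (auto intro: main)
    then show ?thesis using enat by (simp add: M_def[symmetric] power2_eq_square)
  qed
qed

end
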